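(* Suppose the standing assumptions below hold and $g$ is convex. Let $\bm{x}^{k-1},\bm{x}^k\in C$, $\beta_k\in[0,1)$, and $\bm{y}^k:=\bm{x}^k+\beta_k(\bm{x}^k-\bm{x}^{k-1})\in C$. Let $\hat f_k$ be an auxiliary function of $f$ at $\bm{x}^k$ such that $(\hat f_k,\phi)$ is $L_k$-smad on $C$, let $\lambda_k>0$, and let $$\bm{x}^{k+1}\in\operatorname*{argmin}_{\bm{x}\in\overline C}\Big\{\langle\nabla\hat f_k(\bm{y}^k),\bm{x}-\bm{y}^k\rangle+g(\bm{x})+\tfrac1{\lambda_k}D_\phi(\bm{x},\bm{y}^k)\Big\}$$ with $\bm{x}^{k+1}\in C$. Then $$\lambda_k\Psi(\bm{x}^{k+1})\le\lambda_k\Psi(\bm{x}^k)+(1+\lambda_kL_k)D_\phi(\bm{x}^k,\bm{y}^k)-(1-\lambda_kL_k)D_\phi(\bm{x}^{k+1},\bm{y}^k)-D_\phi(\bm{x}^k,\bm{x}^{k+1}).$$ Furthermore, if $D_\phi(\bm{x}^k,\bm{y}^k)\le\rho\,D_\phi(\bm{x}^{k-1},\bm{x}^k)$ for some $\rho\in(0,1]$ (as guaranteed by the adaptive restart scheme), then for every $M>0$, $$\lambda_k\big(\Psi(\bm{x}^{k+1})+MD_\phi(\bm{x}^k,\bm{x}^{k+1})\big)\le\lambda_k\big(\Psi(\bm{x}^k)+MD_\phi(\bm{x}^{k-1},\bm{x}^k)\big)-(\lambda_kM-\rho(1+\lambda_kL_k))D_\phi(\bm{x}^{k-1},\bm{x}^k)-(1-\lambda_kL_k)D_\phi(\bm{x}^{k+1},\bm{y}^k)-(1-\lambda_kM)D_\phi(\bm{x}^k,\bm{x}^{k+1}).$$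 In particular, if $0<\lambda_kL_k<1$ and $\rho(1+\lambda_kL_k)<\lambda_kM<1$, then $\Psi(\bm{x}^{k+1})+MD_\phi(\bm{x}^k,\bm{x}^{k+1})\le\Psi(\bm{x}^k)+MD_\phi(\bm{x}^{k-1},\bm{x}^k)$.
   Context: Let $C\subset\mathbb{R}^n$ be a nonempty open convex set. A function $\phi:\mathbb{R}^n\to(-\infty,+\infty]$ is a kernel generating distance associated with $C$ (written $\phi\in\mathcal{G}(C)$) if $\phi$ is proper, lower semicontinuous and convex with $\operatorname{dom}\phi\subset\overline{C}$ and $\operatorname{dom}\partial\phi=C$, and $\phi$ is $C^1$ on $\operatorname{int}\operatorname{dom}\phi=C$. The Bregman distance is $D_\phi(\bm{x},\bm{y})=\phi(\bm{x})-\phi(\bm{y})-\langle\nabla\phi(\bm{y}),\bm{x}-\bm{y}\rangle$ for $\bm{x}\in\operatorname{dom}\phi$, $\bm{y}\in C$. For $\phi\in\mathcal{G}(C)$ and $h:\mathbb{R}^n\to(-\infty,+\infty]$ proper, lower semicontinuous, with $\operatorname{dom}\phi\subset\operatorname{dom}h$ and $h$ of class $C^1$ on $C$, the pair $(h,\phi)$ is called $L$-smooth adaptable ($L$-smad) on $C$ if $L>0$ and both $L\phi-h$ and $L\phi+h$ are convex on $C$. Given $\bm{y}\in C$, a function $\hat f:\mathbb{R}^n\to(-\infty,+\infty]$ is an auxiliary function of $f$ at $\bm{y}$ if $\hat f$ is proper, lower semicontinuous, $\operatorname{dom}\phi\subset\operatorname{dom}\hat f$, $\hat f$ is $C^1$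 on $C$, $f(\bm{x})\le\hat f(\bm{x})$ for all $\bm{x}\in C$, $\hat f(\bm{y})=f(\bm{y})$ and $\nabla\hat f(\bm{y})=\nabla f(\bm{y})$. Standing assumptions: the problem is $\min_{\bm{x}\in\overline C}\Psi(\bm{x}):=f(\bm{x})+g(\bm{x})$, where (i) $\phi\in\mathcal{G}(C)$ with $\overline{C}=\overline{\operatorname{dom}\phi}$; (ii) $f:\mathbb{R}^n\to(-\infty,+\infty]$ is proper, lower semicontinuous, $\operatorname{dom}\phi\subset\operatorname{dom}f$, and $f$ is $C^1$ on $C$; (iii) $g:\mathbb{R}^n\to(-\infty,+\infty]$ is proper, lower semicontinuous with $\operatorname{dom}g\cap C\neq\emptyset$; (iv) $\inf_{\overline C}\Psi>-\infty$; (v) $\phi+\lambda g$ is supercoercive for every $\lambda>0$. *)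

theory Defs
  imports "HOL-Analysis.Analysis" "HOL-Library.Extended_Real"
begin

text \<open>Extended-real-valued functions on a Euclidean space ('a, i.e. R^n).
  Values in (-inf,+inf] are modelled by ereal; properness excludes -inf.\<close>

definition edom :: "('a \<Rightarrow> ereal) \<Rightarrow> 'a set" where
  "edom f = {x. f x < \<infinity>}"

definition proper_fun :: "('a \<Rightarrow> ereal) \<Rightarrow> bool" where
  "proper_fun f \<longleftrightarrow> (\<forall>x. f x \<noteq> -\<infinity>) \<and> (\<exists>x. f x < \<infinity>)"

definition lsc_fun :: "('a::topological_space \<Rightarrow> ereal) \<Rightarrow> bool" where
  "lsc_fun f \<longleftrightarrow> (\<forall>x X. X \<longlonglongrightarrow> x \<longrightarrow> f x \<le> liminf (\<lambda>n. f (X n)))"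

definition convex_fun :: "('a::real_vector \<Rightarrow> ereal) \<Rightarrow> bool" where
  "convex_fun f \<longleftrightarrow> convex (edom f) \<and> convex_on (edom f) (\<lambda>x. real_of_ereal (f x))"

definition subdiff :: "('a::real_inner \<Rightarrow> ereal) \<Rightarrow> 'a \<Rightarrow> 'a set" where
  "subdiff f x = {v. \<bar>f x\<bar> \<noteq> \<infinity> \<and> (\<forall>z. f z \<ge> f x + ereal (v \<bullet> (z - x)))}"

definition dom_subdiff :: "('a::real_inner \<Rightarrow> ereal) \<Rightarrow> 'a set" where
  "dom_subdiff f = {x. subdiff f x \<noteq> {}}"

definition grad :: "('a::euclidean_space \<Rightarrow> ereal) \<Rightarrow> 'a \<Rightarrow> 'a" where
  "grad f x = (THE v. ((\<lambda>y. real_of_ereal (f y)) has_derivative (\<lambda>h. v \<bullet> h)) (at x))"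

definition C1_on :: "'a::euclidean_space set \<Rightarrow> ('a \<Rightarrow> ereal) \<Rightarrow> bool" where
  "C1_on C f \<longleftrightarrow> (\<forall>x\<in>C. \<bar>f x\<bar> \<noteq> \<infinity>) \<and>
     (\<exists>G. (\<forall>x\<in>C. ((\<lambda>y. real_of_ereal (f y)) has_derivative (\<lambda>h. G x \<bullet> h)) (at x))
          \<and> continuous_on C G)"

definition kernel_gen_dist :: "'a::euclidean_space set \<Rightarrow> ('a \<Rightarrow> ereal) \<Rightarrow> bool" where
  "kernel_gen_dist C \<phi> \<longleftrightarrow> open C \<and> convex C \<and> C \<noteq> {} \<and>
     proper_fun \<phi> \<and> lsc_fun \<phi> \<and> convex_fun \<phi> \<and>
     edom \<phi> \<subseteq> closure C \<and> dom_subdiff \<phi> = C \<and>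
     interior (edom \<phi>) = C \<and> C1_on C \<phi>"

text \<open>Bregman distance D_phi(x,y) (for y in C); equals +inf when phi x = +inf.\<close>
definition bregman :: "('a::euclidean_space \<Rightarrow> ereal) \<Rightarrow> 'a \<Rightarrow> 'a \<Rightarrow> ereal" where
  "bregman \<phi> x y = \<phi> x - ereal (real_of_ereal (\<phi> y) + grad \<phi> y \<bullet> (x - y))"

definition smad :: "'a::euclidean_space set \<Rightarrow> ('a \<Rightarrow> ereal) \<Rightarrow> ('a \<Rightarrow> ereal) \<Rightarrow> real \<Rightarrow> bool" where
  "smad C h \<phi> L \<longleftrightarrow> kernel_gen_dist C \<phi> \<and> proper_fun h \<and> lsc_fun h \<and>
     edom \<phi> \<subseteq> edom h \<and> C1_on C h \<and> L > 0 \<and>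
     convex_on C (\<lambda>x. L * real_of_ereal (\<phi> x) - real_of_ereal (h x)) \<and>
     convex_on C (\<lambda>x. L * real_of_ereal (\<phi> x) + real_of_ereal (h x))"

definition aux_fun :: "'a::euclidean_space set \<Rightarrow> ('a \<Rightarrow> ereal) \<Rightarrow> ('a \<Rightarrow> ereal) \<Rightarrow> 'a \<Rightarrow> ('a \<Rightarrow> ereal) \<Rightarrow> bool" where
  "aux_fun C \<phi> f y fh \<longleftrightarrow> y \<in> C \<and> proper_fun fh \<and> lsc_fun fh \<and> edom \<phi> \<subseteq> edom fh \<and>
     C1_on C fh \<and> (\<forall>x\<in>C. f x \<le> fh x) \<and> fh y = f y \<and> grad fh y = grad f y"

definition supercoercive :: "('a::real_normed_vector \<Rightarrow> ereal) \<Rightarrow> bool" where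
  "supercoercive F \<longleftrightarrow> (\<forall>M::real. \<exists>R>0. \<forall>x. R \<le> norm x \<longrightarrow> ereal (M * norm x) \<le> F x)"

definition standing_assumptions :: "'a::euclidean_space set \<Rightarrow> ('a \<Rightarrow> ereal) \<Rightarrow> ('a \<Rightarrow> ereal) \<Rightarrow> ('a \<Rightarrow> ereal) \<Rightarrow> bool" where
  "standing_assumptions C \<phi> f g \<longleftrightarrow>
     kernel_gen_dist C \<phi> \<and> closure C = closure (edom \<phi>) \<and>
     proper_fun f \<and> lsc_fun f \<and> edom \<phi> \<subseteq> edom f \<and> C1_on C f \<and>
     proper_fun g \<and> lsc_fun g \<and> edom g \<inter> C \<noteq> {} \<and>
     (\<exists>m::real. \<forall>x\<in>closure C. ereal m \<le> f x + g x) \<and>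
     (\<forall>t>0. supercoercive (\<lambda>x. \<phi> x + ereal t * g x))"

end

theory Submission
  imports Defs
begin

lemma grad_eq:
  fixes F :: "'a::euclidean_space \<Rightarrow> ereal"
  assumes "((\<lambda>y. real_of_ereal (F y)) has_derivative (\<lambda>h. v \<bullet> h)) (at x)"
  shows "grad F x = v"
  unfolding grad_def
proof (rule the_equality)
  fix w assume "((\<lambda>y. real_of_ereal (F y)) has_derivative (\<lambda>h. w \<bullet> h)) (at x)"
  from has_derivative_unique[OF assms this] have "(\<lambda>h. v \<bullet> h) = (\<lambda>h. w \<bullet> h)" .
  hence "v \<bullet> (v - w) = w \<bullet> (v - w)" by metis
  hence "(v - w) \<bullet> (v - w) = 0" by (simp add: inner_diff_left)
  thus "w = v" by simp
qed (use assms in auto)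

lemma dirderiv:
  fixes F :: "'a::euclidean_space \<Rightarrow> real"
  assumes "(F has_derivative (\<lambda>h. v \<bullet> h)) (at x)"
  shows "((\<lambda>t. (F (x + t *\<^sub>R d) - F x) / t) \<longlongrightarrow> v \<bullet> d) (at_right 0)"
proof -
  have l: "((\<lambda>t. x + t *\<^sub>R d) has_derivative (\<lambda>s. s *\<^sub>R d)) (at 0)"
    by (auto intro!: derivative_eq_intros)
  have a: "(F has_derivative (\<lambda>h. v \<bullet> h)) (at ((\<lambda>t. x + t *\<^sub>R d) 0))" using assms by simp
  have "((\<lambda>t. F (x + t *\<^sub>R d)) has_derivative (\<lambda>s. v \<bullet> (s *\<^sub>R d))) (at 0)"
    using has_derivative_compose[OF l a] by (simp add: o_def)
  hence "((\<lambda>t. F (x + t *\<^sub>R d)) has_field_derivative (v \<bullet> d)) (at 0)"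
  proof -
    have eq: "(\<lambda>s. v \<bullet> (s *\<^sub>R d)) = (*) (v \<bullet> d)" by (rule ext) simp
    show ?thesis using \<open>((\<lambda>t. F (x + t *\<^sub>R d)) has_derivative (\<lambda>s. v \<bullet> (s *\<^sub>R d))) (at 0)\<close>
      unfolding eq has_field_derivative_def .
  qed
  hence "((\<lambda>h. (F (x + (0 + h) *\<^sub>R d) - F (x + 0 *\<^sub>R d)) / h) \<longlongrightarrow> v \<bullet> d) (at 0)"
    unfolding DERIV_def .
  hence "((\<lambda>h. (F (x + h *\<^sub>R d) - F x) / h) \<longlongrightarrow> v \<bullet> d) (at 0)" by simp
  thus ?thesis by (rule filterlim_mono) (auto simp: at_le)
qed

lemma quot_lower:
  fixes F :: "'a::euclidean_space \<Rightarrow> real"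
  assumes "(F has_derivative (\<lambda>h. v \<bullet> h)) (at x)"
    and "\<And>t. 0 < t \<Longrightarrow> t \<le> 1 \<Longrightarrow> c \<le> (F (x + t *\<^sub>R d) - F x) / t"
  shows "c \<le> v \<bullet> d"
proof (rule tendsto_le[OF _ dirderiv[OF assms(1)] tendsto_const])
  show "at_right (0::real) \<noteq> bot" by simp
  show "\<forall>\<^sub>F t in at_right 0. c \<le> (F (x + t *\<^sub>R d) - F x) / t"
  proof -
    have "eventually (\<lambda>t. t \<in> {0<..<1}) (at_right (0::real))" by (rule eventually_at_right_real) simp
    thus ?thesis by (rule eventually_mono) (auto intro: assms(2))
  qed
qed

lemma quot_upper:
  fixes F :: "'a::euclidean_space \<Rightarrow> real"
  assumes "(F has_derivative (\<lambda>h. v \<bullet> h)) (at x)"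
    and "\<And>t. 0 < t \<Longrightarrow> t \<le> 1 \<Longrightarrow> (F (x + t *\<^sub>R d) - F x) / t \<le> c"
  shows "v \<bullet> d \<le> c"
proof (rule tendsto_le[OF _ tendsto_const dirderiv[OF assms(1)]])
  show "at_right (0::real) \<noteq> bot" by simp
  show "\<forall>\<^sub>F t in at_right 0. (F (x + t *\<^sub>R d) - F x) / t \<le> c"
  proof -
    have "eventually (\<lambda>t. t \<in> {0<..<1}) (at_right (0::real))" by (rule eventually_at_right_real) simp
    thus ?thesis by (rule eventually_mono) (auto intro: assms(2))
  qed
qed

lemma convex_grad_ineq:
  fixes F :: "'a::euclidean_space \<Rightarrow> real"
  assumes cv: "convex_on S F" and S: "convex S" and x: "x \<in> S" and z: "z \<in> S"
    and d: "(F has_derivative (\<lambda>h. v \<bullet> h)) (at x)"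
  shows "F x + v \<bullet> (z - x) \<le> F z"
proof -
  have "v \<bullet> (z - x) \<le> F z - F x"
  proof (rule quot_upper[OF d])
    fix t :: real assume t: "0 < t" "t \<le> 1"
    have e: "x + t *\<^sub>R (z - x) = (1 - t) *\<^sub>R x + t *\<^sub>R z" by (simp add: algebra_simps)
    have "F ((1 - t) *\<^sub>R x + t *\<^sub>R z) \<le> (1 - t) * F x + t * F z"
      using t x z cv by (intro convex_onD) auto
    hence "F (x + t *\<^sub>R (z - x)) - F x \<le> t * (F z - F x)" unfolding e by (simp add: algebra_simps)
    thus "(F (x + t *\<^sub>R (z - x)) - F x) / t \<le> F z - F x" using t by (simp add: divide_le_eq mult.commute)
  qed
  thus ?thesis by simp
qed

theorem mainTheorem3:
  fixes C :: "'a::euclidean_space set"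
    and \<phi> f g fh :: "'a \<Rightarrow> ereal"
    and xprev xk y xnext :: 'a
    and \<beta> lam L :: real
  assumes SA: "standing_assumptions C \<phi> f g"
    and gconv: "convex_fun g"
    and xprev: "xprev \<in> C" and xk: "xk \<in> C"
    and beta: "0 \<le> \<beta>" "\<beta> < 1"
    and ydef: "y = xk + \<beta> *\<^sub>R (xk - xprev)" and yC: "y \<in> C"
    and aux: "aux_fun C \<phi> f xk fh"
    and sm: "smad C fh \<phi> L"
    and lam: "lam > 0"
    and xnext_cl: "xnext \<in> closure C"
    and xnext_min: "\<forall>x\<in>closure C.
          ereal (grad fh y \<bullet> (xnext - y)) + g xnext + ereal (1 / lam) * bregman \<phi> xnext y
        \<le> ereal (grad fh y \<bullet> (x - y)) + g x + ereal (1 / lam) * bregman \<phi> x y"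
    and xnextC: "xnext \<in> C"
  shows "ereal lam * (f xnext + g xnext)
           \<le> ereal lam * (f xk + g xk) + ereal (1 + lam * L) * bregman \<phi> xk y
              - ereal (1 - lam * L) * bregman \<phi> xnext y - bregman \<phi> xk xnext
       \<and> (\<forall>\<rho> M. 0 < \<rho> \<and> \<rho> \<le> 1 \<and> bregman \<phi> xk y \<le> ereal \<rho> * bregman \<phi> xprev xk \<and> M > 0 \<longrightarrow>
           (
           ereal lam * (f xnext + g xnext + ereal M * bregman \<phi> xk xnext)
           \<le> ereal lam * (f xk + g xk + ereal M * bregman \<phi> xprev xk)
              - ereal (lam * M - \<rho> * (1 + lam * L)) * bregman \<phi> xprev xk
              - ereal (1 - lam * L) * bregman \<phi> xnext y
              - ereal (1 - lam * M) * bregman \<phi> xk xnext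
           \<and> (0 < lam * L \<and> lam * L < 1 \<and> \<rho> * (1 + lam * L) < lam * M \<and> lam * M < 1 \<longrightarrow>
                f xnext + g xnext + ereal M * bregman \<phi> xk xnext
                \<le> f xk + g xk + ereal M * bregman \<phi> xprev xk)))"
proof -
  from SA have kg: "kernel_gen_dist C \<phi>" and fC1: "C1_on C f" and pg: "proper_fun g"
    unfolding standing_assumptions_def by auto
  from kg have oC: "open C" and cC: "convex C" and pphi: "C1_on C \<phi>" and cphi: "convex_fun \<phi>"
    and intd: "interior (edom \<phi>) = C" unfolding kernel_gen_dist_def by auto
  from sm have hC1: "C1_on C fh" and Lpos: "L > 0"
    and cv1: "convex_on C (\<lambda>x. L * real_of_ereal (\<phi> x) - real_of_ereal (fh x))"
    and cv2: "convex_on C (\<lambda>x. L * real_of_ereal (\<phi> x) + real_of_ereal (fh x))"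
    unfolding smad_def by auto
  from aux have fle: "\<And>x. x \<in> C \<Longrightarrow> f x \<le> fh x" and fhk: "fh xk = f xk"
    unfolding aux_fun_def by auto
  define \<Phi> where "\<Phi> = (\<lambda>x. real_of_ereal (\<phi> x))"
  define Fh where "Fh = (\<lambda>x. real_of_ereal (fh x))"
  obtain Gp where Gp: "\<And>x. x \<in> C \<Longrightarrow> (\<Phi> has_derivative (\<lambda>h. Gp x \<bullet> h)) (at x)"
    and phifin: "\<And>x. x \<in> C \<Longrightarrow> \<bar>\<phi> x\<bar> \<noteq> \<infinity>"
  proof -
    have "(\<forall>x\<in>C. \<bar>\<phi> x\<bar> \<noteq> \<infinity>) \<and> (\<exists>G. (\<forall>x\<in>C. (\<Phi> has_derivative (\<lambda>h. G x \<bullet> h)) (at x)) \<and> continuous_on C G)"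
      using pphi unfolding C1_on_def \<Phi>_def .
    then obtain G where "\<forall>x\<in>C. (\<Phi> has_derivative (\<lambda>h. G x \<bullet> h)) (at x)"
      and "\<forall>x\<in>C. \<bar>\<phi> x\<bar> \<noteq> \<infinity>" by (elim conjE exE)
    thus ?thesis by (intro that[of G]) auto
  qed
  obtain Gh where Gh: "\<And>x. x \<in> C \<Longrightarrow> (Fh has_derivative (\<lambda>h. Gh x \<bullet> h)) (at x)"
    and fhfin: "\<And>x. x \<in> C \<Longrightarrow> \<bar>fh x\<bar> \<noteq> \<infinity>"
  proof -
    have "(\<forall>x\<in>C. \<bar>fh x\<bar> \<noteq> \<infinity>) \<and> (\<exists>G. (\<forall>x\<in>C. (Fh has_derivative (\<lambda>h. G x \<bullet> h)) (at x)) \<and> continuous_on C G)"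
      using hC1 unfolding C1_on_def Fh_def .
    then obtain G where "\<forall>x\<in>C. (Fh has_derivative (\<lambda>h. G x \<bullet> h)) (at x)"
      and "\<forall>x\<in>C. \<bar>fh x\<bar> \<noteq> \<infinity>" by (elim conjE exE)
    thus ?thesis by (intro that[of G]) auto
  qed
  have ffin: "\<And>x. x \<in> C \<Longrightarrow> \<bar>f x\<bar> \<noteq> \<infinity>" using fC1[unfolded C1_on_def, THEN conjunct1] by auto
  have gradp: "\<And>x. x \<in> C \<Longrightarrow> grad \<phi> x = Gp x"
    by (rule grad_eq) (use Gp in \<open>auto simp: \<Phi>_def\<close>)
  have gradh: "grad fh y = Gh y"
    by (rule grad_eq) (use Gh yC in \<open>auto simp: Fh_def\<close>)
  have phiE: "\<And>x. x \<in> C \<Longrightarrow> \<phi> x = ereal (\<Phi> x)" using phifin unfolding \<Phi>_def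
    by (metis ereal_real)
  define D where "D x z = \<Phi> x - \<Phi> z - Gp z \<bullet> (x - z)" for x z
  have brE: "\<And>x z. x \<in> C \<Longrightarrow> z \<in> C \<Longrightarrow> bregman \<phi> x z = ereal (D x z)"
  proof -
    fix x z assume xz: "x \<in> C" "z \<in> C"
    have "real_of_ereal (\<phi> z) = \<Phi> z" by (simp add: \<Phi>_def)
    thus "bregman \<phi> x z = ereal (D x z)"
      unfolding bregman_def D_def using phiE[OF xz(1)] gradp[OF xz(2)] by simp
  qed
  have Cedom: "C \<subseteq> edom \<phi>" using intd interior_subset by blast
  have cvPhi: "convex_on C \<Phi>" using cphi Cedom cC convex_on_subset unfolding convex_fun_def \<Phi>_def
    by blast
  have Dnn: "\<And>x z. x \<in> C \<Longrightarrow> z \<in> C \<Longrightarrow> 0 \<le> D x z"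
    using convex_grad_ineq[OF cvPhi cC _ _ Gp] unfolding D_def by fastforce
  have fE: "\<And>x. x \<in> C \<Longrightarrow> f x = ereal (real_of_ereal (f x))" using ffin by (metis ereal_real)
  have fhE: "\<And>x. x \<in> C \<Longrightarrow> fh x = ereal (Fh x)" using fhfin unfolding Fh_def by (metis ereal_real)
  have fFh: "real_of_ereal (f xnext) \<le> Fh xnext"
    using fle[OF xnextC] fE[OF xnextC] fhE[OF xnextC] by (metis ereal_less_eq(3))
  have fkFh: "real_of_ereal (f xk) = Fh xk" using fhk fhE[OF xk] by (metis real_of_ereal.simps(1))
  have d1: "((\<lambda>x. L * \<Phi> x - Fh x) has_derivative (\<lambda>h. (L *\<^sub>R Gp y - Gh y) \<bullet> h)) (at y)"
    using Gp[OF yC] Gh[OF yC]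
    by (auto intro!: derivative_eq_intros simp: algebra_simps inner_diff_left)
  have d2: "((\<lambda>x. L * \<Phi> x + Fh x) has_derivative (\<lambda>h. (L *\<^sub>R Gp y + Gh y) \<bullet> h)) (at y)"
    using Gp[OF yC] Gh[OF yC]
    by (auto intro!: derivative_eq_intros simp: algebra_simps inner_add_left)
  have cv1': "convex_on C (\<lambda>x. L * \<Phi> x - Fh x)" using cv1 by (simp add: \<Phi>_def Fh_def)
  have cv2': "convex_on C (\<lambda>x. L * \<Phi> x + Fh x)" using cv2 by (simp add: \<Phi>_def Fh_def)
  have s1: "L * \<Phi> y - Fh y + (L *\<^sub>R Gp y - Gh y) \<bullet> (xnext - y) \<le> L * \<Phi> xnext - Fh xnext"
    using convex_grad_ineq[OF cv1' cC yC xnextC d1] by simp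
  have s2: "L * \<Phi> y + Fh y + (L *\<^sub>R Gp y + Gh y) \<bullet> (xk - y) \<le> L * \<Phi> xk + Fh xk"
    using convex_grad_ineq[OF cv2' cC yC xk d2] by simp
  have smk: "Fh xnext \<le> Fh xk + Gh y \<bullet> (xnext - xk) + L * D xnext y + L * D xk y"
    using s1 s2 unfolding D_def by (simp add: inner_diff_left inner_add_left inner_diff_right algebra_simps)
  define fn where "fn = real_of_ereal (f xnext)"
  define fk where "fk = real_of_ereal (f xk)"
  have fnE: "f xnext = ereal fn" using fE[OF xnextC] unfolding fn_def .
  have fkE: "f xk = ereal fk" using fE[OF xk] unfolding fk_def .
  define Dky where "Dky = D xk y"
  define Dny where "Dny = D xnext y"
  define Dkn where "Dkn = D xk xnext"
  define Dpk where "Dpk = D xprev xk"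
  have bky: "bregman \<phi> xk y = ereal Dky" using brE[OF xk yC] unfolding Dky_def .
  have bny: "bregman \<phi> xnext y = ereal Dny" using brE[OF xnextC yC] unfolding Dny_def .
  have bkn: "bregman \<phi> xk xnext = ereal Dkn" using brE[OF xk xnextC] unfolding Dkn_def .
  have bpk: "bregman \<phi> xprev xk = ereal Dpk" using brE[OF xprev xk] unfolding Dpk_def .
  have nn: "0 \<le> Dky" "0 \<le> Dny" "0 \<le> Dkn" "0 \<le> Dpk"
    unfolding Dky_def Dny_def Dkn_def Dpk_def using Dnn xk yC xnextC xprev by auto
  have xkcl: "xk \<in> closure C" using xk closure_subset by blast
  show ?thesis
  proof (cases "g xk = \<infinity>")
    case True
    show ?thesis unfolding bky bny bkn bpk fkE True using lam by (simp add: ereal_mult_infty)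
  next
    case False
    have gninf: "\<And>x. g x \<noteq> -\<infinity>" using pg unfolding proper_fun_def by auto
    define gk where "gk = real_of_ereal (g xk)"
    have gkE: "g xk = ereal gk" using False gninf[of xk] unfolding gk_def by (cases "g xk") auto
    have gnfin: "g xnext \<noteq> \<infinity>"
    proof
      assume inf: "g xnext = \<infinity>"
      have "ereal (grad fh y \<bullet> (xnext - y)) + g xnext + ereal (1 / lam) * bregman \<phi> xnext y
        \<le> ereal (grad fh y \<bullet> (xk - y)) + g xk + ereal (1 / lam) * bregman \<phi> xk y"
        using xnext_min xkcl by blast
      thus False unfolding inf gkE bky bny by simp
    qed
    define gn where "gn = real_of_ereal (g xnext)"
    have gnE: "g xnext = ereal gn" using gnfin gninf[of xnext] unfolding gn_def by (cases "g xnext") auto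
    define a where "a = Gh y"
    define d where "d = xk - xnext"
    have cg: "convex (edom g)" and cvg: "convex_on (edom g) (\<lambda>x. real_of_ereal (g x))"
      using gconv unfolding convex_fun_def by auto
    have edk: "xk \<in> edom g" and edn: "xnext \<in> edom g" unfolding edom_def using gkE gnE by auto
    have opt: "Gp y \<bullet> d - lam * (a \<bullet> d) - lam * gk + lam * gn \<le> Gp xnext \<bullet> d"
    proof (rule quot_lower[OF Gp[OF xnextC]])
      fix t :: real assume t: "0 < t" "t \<le> 1"
      define xt where "xt = xnext + t *\<^sub>R d"
      have xte: "xt = (1 - t) *\<^sub>R xnext + t *\<^sub>R xk" unfolding xt_def d_def by (simp add: algebra_simps)
      have xtC: "xt \<in> C" unfolding xte using cC xk xnextC t by (intro convexD) auto
      have xtg: "xt \<in> edom g" unfolding xte using cg edk edn t by (intro convexD) auto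
      define gt where "gt = real_of_ereal (g xt)"
      have gtE: "g xt = ereal gt" using xtg gninf[of xt] unfolding gt_def edom_def by (cases "g xt") auto
      have h2: "gt \<le> (1 - t) * gn + t * gk"
        unfolding gt_def xte gn_def gk_def using cvg edk edn t by (intro convex_onD) auto
      have "ereal (grad fh y \<bullet> (xnext - y)) + g xnext + ereal (1 / lam) * bregman \<phi> xnext y
        \<le> ereal (grad fh y \<bullet> (xt - y)) + g xt + ereal (1 / lam) * bregman \<phi> xt y"
        using xnext_min xtC closure_subset by blast
      hence h1: "a \<bullet> (xnext - y) + gn + (1 / lam) * Dny \<le> a \<bullet> (xt - y) + gt + (1 / lam) * D xt y"
        unfolding gnE gtE bny brE[OF xtC yC] gradh a_def by simp
      have h3: "a \<bullet> (xt - y) = a \<bullet> (xnext - y) + t * (a \<bullet> d)"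
        unfolding xt_def by (simp add: inner_diff_right inner_add_right)
      have h4: "D xt y = Dny + (\<Phi> xt - \<Phi> xnext) - t * (Gp y \<bullet> d)"
        unfolding D_def Dny_def xt_def by (simp add: inner_diff_right inner_add_right)
      have h4': "(1 / lam) * D xt y = (1 / lam) * Dny + (1 / lam) * ((\<Phi> xt - \<Phi> xnext) - t * (Gp y \<bullet> d))"
        unfolding h4 by (simp add: algebra_simps)
      have h5: "0 \<le> (t * (a \<bullet> d) + t * gk - t * gn) + (1 / lam) * ((\<Phi> xt - \<Phi> xnext) - t * (Gp y \<bullet> d))"
        using h1 h2 h3 h4' by (simp add: algebra_simps)
      have "lam * ((t * (a \<bullet> d) + t * gk - t * gn) + (1 / lam) * ((\<Phi> xt - \<Phi> xnext) - t * (Gp y \<bullet> d)))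
         = lam * t * (a \<bullet> d) + lam * t * gk - lam * t * gn + ((\<Phi> xt - \<Phi> xnext) - t * (Gp y \<bullet> d))"
        using lam by (simp add: field_simps)
      moreover have "0 \<le> lam * ((t * (a \<bullet> d) + t * gk - t * gn) + (1 / lam) * ((\<Phi> xt - \<Phi> xnext) - t * (Gp y \<bullet> d)))"
        using h5 lam by simp
      ultimately have h6: "t * (Gp y \<bullet> d - lam * (a \<bullet> d) - lam * gk + lam * gn) \<le> \<Phi> xt - \<Phi> xnext"
        by (simp add: algebra_simps)
      thus "Gp y \<bullet> d - lam * (a \<bullet> d) - lam * gk + lam * gn \<le> (\<Phi> (xnext + t *\<^sub>R d) - \<Phi> xnext) / t"
        using t unfolding xt_def by (simp add: pos_le_divide_eq mult.commute)
    qed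
    have tp: "Gp xnext \<bullet> d - Gp y \<bullet> d = Dky - Dkn - Dny"
      unfolding Dky_def Dkn_def Dny_def D_def d_def by (simp add: inner_diff_right)
    have star: "lam * gn - lam * gk \<le> lam * (a \<bullet> d) + Dky - Dkn - Dny" using opt tp by linarith
    have smk': "Fh xnext \<le> Fh xk - a \<bullet> d + L * Dny + L * Dky"
      using smk unfolding a_def d_def Dny_def Dky_def by (simp add: inner_diff_right)
    have "lam * Fh xnext \<le> lam * (Fh xk - a \<bullet> d + L * Dny + L * Dky)"
      using smk' lam by (intro mult_left_mono) auto
    hence smk2: "lam * Fh xnext \<le> lam * Fh xk - lam * (a \<bullet> d) + lam * L * Dny + lam * L * Dky"
      by (simp add: algebra_simps)
    have fl: "lam * fn \<le> lam * Fh xnext" using fFh lam unfolding fn_def by simp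
    have R1: "lam * (fn + gn) \<le> lam * (fk + gk) + (1 + lam * L) * Dky - (1 - lam * L) * Dny - Dkn"
    proof -
      have "lam * fn + lam * gn \<le> lam * fk + lam * gk + Dky + lam * L * Dky - Dny + lam * L * Dny - Dkn"
      proof -
        have "lam * fk = lam * Fh xk" using fkFh unfolding fk_def by simp
        thus ?thesis using star smk2 fl by linarith
      qed
      thus ?thesis by (simp add: algebra_simps)
    qed
    have P1: "ereal lam * (f xnext + g xnext)
           \<le> ereal lam * (f xk + g xk) + ereal (1 + lam * L) * bregman \<phi> xk y
              - ereal (1 - lam * L) * bregman \<phi> xnext y - bregman \<phi> xk xnext"
      unfolding fnE fkE gnE gkE bky bny bkn using R1 by simp
    have P2: "ereal lam * (f xnext + g xnext + ereal M * bregman \<phi> xk xnext)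
           \<le> ereal lam * (f xk + g xk + ereal M * bregman \<phi> xprev xk)
              - ereal (lam * M - \<rho> * (1 + lam * L)) * bregman \<phi> xprev xk
              - ereal (1 - lam * L) * bregman \<phi> xnext y
              - ereal (1 - lam * M) * bregman \<phi> xk xnext
           \<and> (0 < lam * L \<and> lam * L < 1 \<and> \<rho> * (1 + lam * L) < lam * M \<and> lam * M < 1 \<longrightarrow>
                f xnext + g xnext + ereal M * bregman \<phi> xk xnext
                \<le> f xk + g xk + ereal M * bregman \<phi> xprev xk)"
      if hyp: "0 < \<rho> \<and> \<rho> \<le> 1 \<and> bregman \<phi> xk y \<le> ereal \<rho> * bregman \<phi> xprev xk \<and> M > 0" for \<rho> M
    proof -
      have hr: "Dky \<le> \<rho> * Dpk" using hyp unfolding bky bpk by simp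
      have m: "(1 + lam * L) * Dky \<le> (1 + lam * L) * (\<rho> * Dpk)"
        using hr lam Lpos by (intro mult_left_mono) auto
      have R2: "lam * (fn + gn + M * Dkn) \<le> lam * (fk + gk + M * Dpk) - (lam * M - \<rho> * (1 + lam * L)) * Dpk
              - (1 - lam * L) * Dny - (1 - lam * M) * Dkn"
      proof -
        have "lam * (fn + gn) + lam * M * Dkn \<le> lam * (fk + gk) + lam * M * Dpk + ((1 + lam * L) * (\<rho> * Dpk) - lam * M * Dpk)
              - (1 - lam * L) * Dny - Dkn + lam * M * Dkn"
          using R1 m by linarith
        thus ?thesis by (simp add: algebra_simps)
      qed
      have R3: "fn + gn + M * Dkn \<le> fk + gk + M * Dpk"
        if c: "0 < lam * L" "lam * L < 1" "\<rho> * (1 + lam * L) < lam * M" "lam * M < 1"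
      proof -
        have "0 \<le> (lam * M - \<rho> * (1 + lam * L)) * Dpk" using c nn by simp
        moreover have "0 \<le> (1 - lam * L) * Dny" using c nn by simp
        moreover have "0 \<le> (1 - lam * M) * Dkn" using c nn by simp
        ultimately have "lam * (fn + gn + M * Dkn) \<le> lam * (fk + gk + M * Dpk)" using R2 by linarith
        thus ?thesis using lam by simp
      qed
      show ?thesis unfolding fnE fkE gnE gkE bky bny bkn bpk using R2 R3 by simp
    qed
    show ?thesis using P1 P2 by blast
  qed
qed
end
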